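(* Let $M\in\mathbb Z$, $s\in\{0,\dots,NL-1\}$ with $M\equiv s\bmod NL$, and $d,l$ non-negative integers with $l\ge d$. Then the linear map $\varrho^d_l:V^d_{s+lNL}\to\mathcal F^d_M$, $w\mapsto w\wedge|M-s-lNL\rangle$, is an isomorphism of vector spaces.
   Context: $N,L\ge2$. $V_{\rm aff}=\mathbb C[z,z^{-1}]\otimes\mathbb C^L\otimes\mathbb C^N$ with basis $u_k=z^{\underline k}\otimes\mathfrak v_{\dot k}\otimes\mathfrak u_{\bar k}$ ($k\in\mathbb Z$), where $k=\bar k-N(\dot k+L\underline k)$ uniquely with $\bar k\in\{1..N\}$, $\dot k\in\{1..L\}$, $\underline k\in\mathbb Z$. Wedges are antisymmetric; normally ordered wedges ($k_1>k_2>\cdots$) form bases. $\mathcal F_M$ has basis the normally ordered semi-infinite wedges $u_{k_1}\wedge u_{k_2}\wedge\cdots$ with $k_i=o_i:=M-i+1$ for all but finitely many $i$; $|K\rangle=u_K\wedge u_{K-1}\wedge\cdots$. Its degree is $\sum_i(\underline{o_i}-\underline{k_i})$ and $\mathcal F_M^d$ is the span of degree-$d$ wedges. $V_{s+lNL}$ is the span of normally ordered finite wedges $u_{k_1}\wedge\cdots\wedge u_{k_{s+lNL}}$ with $\underline{k_{s+lNL}}\le\underline{o_{s+lNL}}$ (with $V_0=\mathbb C$), graded by degree $\sum_{i=1}^{s+lNL}(\underline{o_i}-\underline{k_i})$; $V^d_{s+lNL}$ is the degree-$d$ component. *)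

theory Defs
  imports Complex_Main "HOL-Number_Theory.Cong"
begin

text \<open>Index decomposition k = kbar - N (kdot + L kund), kbar in 1..N, kdot in 1..L.
  ul N L k is the integer kund (underline k).\<close>
definition ul :: "nat \<Rightarrow> nat \<Rightarrow> int \<Rightarrow> int" where
  "ul N L k = (THE u. \<exists>b t. 1 \<le> b \<and> b \<le> int N \<and> 1 \<le> t \<and> t \<le> int L
                      \<and> k = b - int N * (t + int L * u))"

text \<open>Finite wedges u_{k_1} ^ ... ^ u_{k_n} are represented by the index list [k_1,...,k_n]
  (0-based positions, so o_{i+1} = M - i).  Basis of V^d_n (n = s + l N L).\<close>
definition fin_basis :: "nat \<Rightarrow> nat \<Rightarrow> int \<Rightarrow> nat \<Rightarrow> int \<Rightarrow> int list \<Rightarrow> bool" where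
  "fin_basis N L M n d ks \<longleftrightarrow>
     length ks = n \<and> sorted_wrt (>) ks \<and>
     (n > 0 \<longrightarrow> ul N L (ks ! (n - 1)) \<le> ul N L (M - int (n - 1))) \<and>
     (\<Sum>i<n. ul N L (M - int i) - ul N L (ks ! i)) = d"

text \<open>Semi-infinite wedges u_{c 0} ^ u_{c 1} ^ ... are represented by index sequences c.
  Basis of F^d_M: normally ordered, c i = o_{i+1} = M - i for all but finitely many i.\<close>
definition semi_basis :: "nat \<Rightarrow> nat \<Rightarrow> int \<Rightarrow> int \<Rightarrow> (nat \<Rightarrow> int) \<Rightarrow> bool" where
  "semi_basis N L M d c \<longleftrightarrow>
     (\<forall>i j. i < j \<longrightarrow> c j < c i) \<and> finite {i. c i \<noteq> M - int i} \<and>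
     (\<Sum>i\<in>{i. c i \<noteq> M - int i}. ul N L (M - int i) - ul N L (c i)) = d"

definition Vsp :: "nat \<Rightarrow> nat \<Rightarrow> int \<Rightarrow> nat \<Rightarrow> int \<Rightarrow> (int list \<Rightarrow> complex) set" where
  "Vsp N L M n d = {v. finite {x. v x \<noteq> 0} \<and> (\<forall>x. v x \<noteq> 0 \<longrightarrow> fin_basis N L M n d x)}"

definition Fsp :: "nat \<Rightarrow> nat \<Rightarrow> int \<Rightarrow> int \<Rightarrow> ((nat \<Rightarrow> int) \<Rightarrow> complex) set" where
  "Fsp N L M d = {v. finite {x. v x \<noteq> 0} \<and> (\<forall>x. v x \<noteq> 0 \<longrightarrow> semi_basis N L M d x)}"

text \<open>Antisymmetric semi-infinite wedge of an arbitrary index sequence c, expressed in the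
  normally ordered basis: zero if an index repeats, otherwise the sign of the sorting
  permutation times the decreasingly sorted wedge.\<close>
definition sorted_seq :: "(nat \<Rightarrow> int) \<Rightarrow> nat \<Rightarrow> int" where
  "sorted_seq c i = (THE x. x \<in> range c \<and> card {y \<in> range c. x < y} = i)"

definition inversions :: "(nat \<Rightarrow> int) \<Rightarrow> nat" where
  "inversions c = card {(i, j). i < j \<and> c i < c j}"

definition swedge :: "(nat \<Rightarrow> int) \<Rightarrow> (nat \<Rightarrow> int) \<Rightarrow> complex" where
  "swedge c = (if inj c then (\<lambda>b. if b = sorted_seq c then (-1) ^ inversions c else 0)
               else (\<lambda>b. 0))"

text \<open>Index sequence of u_{k_1} ^ ... ^ u_{k_n} ^ |K>, where |K> = u_K ^ u_{K-1} ^ ...\<close>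
definition cat_vac :: "int list \<Rightarrow> int \<Rightarrow> nat \<Rightarrow> int" where
  "cat_vac ks K i = (if i < length ks then ks ! i else K - int (i - length ks))"

definition rho :: "int \<Rightarrow> nat \<Rightarrow> (int list \<Rightarrow> complex) \<Rightarrow> (nat \<Rightarrow> int) \<Rightarrow> complex" where
  "rho M n w = (\<lambda>b. \<Sum>ks\<in>{x. w x \<noteq> 0}. w ks * swedge (cat_vac ks (M - int n)) b)"

end

theory Submission
  imports Defs
begin

lemma ul_eq:
  assumes "N \<ge> 1" "L \<ge> 1"
  shows "ul N L k = (-k) div (int N * int L)"
  unfolding ul_def
proof (rule the_equality)
  define P where "P = int N * int L"
  have P: "P \<ge> 1" using mult_mono[of 1 "int N" 1 "int L"] assms by (simp add: P_def)
  define r where "r = (-k) mod P"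
  define u where "u = (-k) div P"
  have r0: "0 \<le> r" "r < P" using P by (auto simp: r_def)
  have ku: "-k = P * u + r" by (simp add: r_def u_def)
  define t where "t = r div int N + 1"
  define b where "b = int N - r mod int N"
  have "r div int N < int L"
  proof -
    have "0 \<le> r" "r < int L * int N" "Suc 0 \<le> N" using r0 assms by (auto simp: P_def mult.commute)
    then show ?thesis by (smt (verit, best) div_mult2_eq' mult.commute of_nat_less_0_iff zdiv_eq_0_iff)
  qed
  moreover have "0 \<le> r div int N" using r0 by (simp add: div_int_pos_iff)
  moreover have "r mod int N < int N" "0 \<le> r mod int N" using assms by auto
  moreover have "k = b - int N * (t + int L * u)"
  proof -
    have "r = int N * (r div int N) + r mod int N" by simp
    then show ?thesis using ku unfolding b_def t_def P_def by (simp add: algebra_simps)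
  qed
  ultimately show "\<exists>b t. 1 \<le> b \<and> b \<le> int N \<and> 1 \<le> t \<and> t \<le> int L \<and> k = b - int N * (t + int L * (-k div (int N * int L)))"
    unfolding u_def P_def t_def b_def by (intro exI[of _ "int N - r mod int N"] exI[of _ "r div int N + 1"]) auto
next
  fix u assume "\<exists>b t. 1 \<le> b \<and> b \<le> int N \<and> 1 \<le> t \<and> t \<le> int L \<and> k = b - int N * (t + int L * u)"
  then obtain b t where bt: "1 \<le> b" "b \<le> int N" "1 \<le> t" "t \<le> int L" "k = b - int N * (t + int L * u)" by blast
  define r where "r = int N * t - b"
  have "int N * t \<ge> int N" using bt by simp
  hence r0: "0 \<le> r" using bt unfolding r_def by linarith
  have "int N * t \<le> int N * int L" using bt by simp
  hence r1: "r < int N * int L" using bt unfolding r_def by linarith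
  have "-k = r + (int N * int L) * u" using bt by (simp add: r_def algebra_simps)
  moreover have "int N * int L \<noteq> 0" using r0 r1 by linarith
  ultimately have "(-k) div (int N * int L) = r div (int N * int L) + u"
    using div_mult_self2[of "int N * int L" r u] by simp
  also have "r div (int N * int L) = 0" using r0 r1 by simp
  finally show "u = (-k) div (int N * int L)" by simp
qed

lemma NLpos: assumes "N \<ge> 1" "L \<ge> 1" shows "int N * int L > 0"
  using assms by simp

lemma ul_anti:
  assumes "N \<ge> 1" "L \<ge> 1" "k \<le> k'"
  shows "ul N L k' \<le> ul N L k"
  using assms by (simp add: ul_eq zdiv_mono1 NLpos)

lemma ul_strict:
  assumes "N \<ge> 1" "L \<ge> 1" "(int N * int L) dvd x" "x < k"
  shows "ul N L k < ul N L x"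
proof -
  define P where "P = int N * int L"
  have P: "P > 0" using assms by (simp add: P_def)
  obtain m where m: "x = P * m" using assms by (auto simp: P_def)
  have "ul N L x = (-(P*m)) div P" using assms by (simp add: ul_eq m P_def)
  also have "\<dots> = -m" using P by (metis minus_mult_right nonzero_mult_div_cancel_left less_irrefl)
  finally have "ul N L x = -m" .
  moreover have "ul N L k \<le> (-x - 1) div P"
    using assms P by (simp add: ul_eq P_def[symmetric] zdiv_mono1)
  moreover have "(-x - 1) div P = -m - 1"
  proof -
    have e: "-x - 1 = -1 + P * (-m)" by (simp add: m)
    have "(-x - 1) div P = (-1 + P * (-m)) div P" by (simp only: e)
    also have "\<dots> = -m + (-1) div P" using P by (intro div_mult_self2) simp
    finally have "(-x - 1) div P = (-1) div P + (-m)" by simp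
    moreover have "(-1::int) div P = -1" using P
      by (simp add: div_eq_minus1)
    ultimately show ?thesis by simp
  qed
  ultimately show ?thesis by simp
qed

lemma dec_ge:
  fixes c :: "nat \<Rightarrow> int"
  assumes "\<forall>i j. i < j \<longrightarrow> c j < c i" "i \<le> j"
  shows "c i \<ge> c j + int (j - i)"
  using assms(2)
proof (induction j rule: dec_induct)
  case base then show ?case by simp
next
  case (step j)
  have "c (Suc j) < c j" using assms(1) by simp
  then show ?case using step by (simp add: Suc_diff_le)
qed

lemma semi_ge:
  assumes "semi_basis N L M d c"
  shows "c i \<ge> M - int i"
proof -
  have dec: "\<forall>i j. i < j \<longrightarrow> c j < c i" and fin: "finite {i. c i \<noteq> M - int i}"
    using assms by (auto simp: semi_basis_def)
  obtain m where m: "\<forall>j\<in>{i. c i \<noteq> M - int i}. j \<le> m"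
    using fin finite_nat_set_iff_bounded_le by blast
  define j where "j = max i (Suc m)"
  have "c j = M - int j" using m unfolding j_def by fastforce
  moreover have "c i \<ge> c j + int (j - i)" using dec_ge[OF dec] by (simp add: j_def)
  ultimately show ?thesis by (simp add: j_def)
qed

lemma semi_tail:
  assumes N: "N \<ge> 1" and L: "L \<ge> 1" and sb: "semi_basis N L M d c" and dl: "d \<le> int l"
    and cong: "[M = int s] (mod int (N * L))"
  shows "\<forall>i \<ge> s + l * N * L. c i = M - int i"
proof (rule ccontr)
  assume "\<not> ?thesis"
  then obtain i where i: "i \<ge> s + l * N * L" "c i \<noteq> M - int i" by blast
  have ci: "c i > M - int i" using semi_ge[OF sb, of i] i by simp
  have dec: "\<forall>i j. i < j \<longrightarrow> c j < c i" and fin: "finite {i. c i \<noteq> M - int i}"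
    and sum: "(\<Sum>i\<in>{i. c i \<noteq> M - int i}. ul N L (M - int i) - ul N L (c i)) = d"
    using sb by (auto simp: semi_basis_def)
  define D where "D = {i. c i \<noteq> M - int i}"
  define J where "J = (\<lambda>t. s + t * N * L) ` {..l}"
  define f where "f = (\<lambda>i. ul N L (M - int i) - ul N L (c i))"
  have f0: "f j \<ge> 0" for j using ul_anti[OF N L semi_ge[OF sb, of j]] by (simp add: f_def)
  have dvdMs: "int N * int L dvd M - int s" using cong by (simp add: cong_iff_dvd_diff)
  have J1: "j \<in> D \<and> f j \<ge> 1" if jJ: "j \<in> J" for j
  proof -
    obtain t where t: "t \<le> l" "j = s + t * N * L" using jJ by (auto simp: J_def)
    have "j \<le> s + l * N * L" using t by simp
    hence ji: "j \<le> i" using i by simp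
    have "c j \<ge> c i + int (i - j)" using dec_ge[OF dec ji] .
    hence cj: "c j > M - int j" using ci ji by simp
    have "int N * int L dvd M - int j"
    proof -
      have "M - int j = (M - int s) - (int N * int L) * int t" by (simp add: t algebra_simps)
      thus ?thesis using dvdMs by (metis dvd_diff dvd_triv_left)
    qed
    from ul_strict[OF N L this cj] cj show ?thesis by (simp add: D_def f_def)
  qed
  have "J \<subseteq> D" using J1 by blast
  have cardJ: "card J = Suc l"
  proof -
    have "inj_on (\<lambda>t. s + t * N * L) {..l}"
      using N L by (auto simp: inj_on_def)
    thus ?thesis by (simp add: J_def card_image)
  qed
  have finJ: "finite J" by (simp add: J_def)
  have "int (card J) = (\<Sum>j\<in>J. 1)" by simp
  also have "\<dots> \<le> sum f J" using J1 by (intro sum_mono) auto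
  also have "\<dots> \<le> sum f D" using fin \<open>J \<subseteq> D\<close> f0 by (intro sum_mono2) (auto simp: D_def)
  also have "\<dots> = d" using sum by (simp add: D_def f_def)
  finally show False using cardJ dl by simp
qed

lemma dec_less_iff:
  fixes c :: "nat \<Rightarrow> int"
  assumes "\<forall>i j. i < j \<longrightarrow> c j < c i"
  shows "(c i < c j) = (j < i)"
proof
  assume h: "c i < c j" show "j < i"
  proof (rule ccontr)
    assume "\<not> j < i"
    hence "i = j \<or> i < j" by auto
    thus False using h assms by (metis less_asym less_irrefl)
  qed
next
  assume "j < i" thus "c i < c j" using assms by blast
qed

lemma dec_inj:
  fixes c :: "nat \<Rightarrow> int"
  assumes "\<forall>i j. i < j \<longrightarrow> c j < c i"
  shows "inj c"
  unfolding inj_def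
proof (intro allI impI)
  fix x y assume h: "c x = c y" show "x = y"
  proof (rule ccontr)
    assume "x \<noteq> y"
    hence "x < y \<or> y < x" by auto
    thus False using h assms by (metis less_irrefl)
  qed
qed

lemma dec_card_above:
  fixes c :: "nat \<Rightarrow> int"
  assumes "\<forall>i j. i < j \<longrightarrow> c j < c i"
  shows "card {y \<in> range c. c i < y} = i"
proof -
  have "{y \<in> range c. c i < y} = c ` {..<i}"
    using dec_less_iff[OF assms] by auto
  moreover have "inj_on c {..<i}" using dec_inj[OF assms] by (simp add: inj_on_def inj_def)
  ultimately show ?thesis by (simp add: card_image)
qed

lemma swedge_dec:
  fixes c :: "nat \<Rightarrow> int"
  assumes "\<forall>i j. i < j \<longrightarrow> c j < c i"
  shows "swedge c = (\<lambda>b. if b = c then 1 else 0)"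
proof -
  have "sorted_seq c = c"
  proof
    fix i
    show "sorted_seq c i = c i"
      unfolding sorted_seq_def
    proof (rule the_equality)
      show "c i \<in> range c \<and> card {y \<in> range c. c i < y} = i"
        using dec_card_above[OF assms] by simp
    next
      fix x assume "x \<in> range c \<and> card {y \<in> range c. x < y} = i"
      then obtain j where "x = c j" "card {y \<in> range c. c j < y} = i" by auto
      then show "x = c i" using dec_card_above[OF assms, of j] by simp
    qed
  qed
  moreover have "inversions c = 0"
  proof -
    have "{(i, j). i < j \<and> c i < c j} = {}" using assms by (auto dest: less_asym)
    thus ?thesis unfolding inversions_def by (metis card.empty)
  qed
  moreover have "swedge c = (\<lambda>b. if b = sorted_seq c then (-1)^inversions c else 0)"
    using dec_inj[OF assms] unfolding swedge_def by simp
  ultimately show ?thesis by (simp only: power_0)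
qed

lemma cat_vac_char:
  assumes "length ks = n"
  shows "(b = cat_vac ks (M - int n)) = ((\<forall>i\<ge>n. b i = M - int i) \<and> ks = map b [0..<n])"
proof
  assume b: "b = cat_vac ks (M - int n)"
  show "(\<forall>i\<ge>n. b i = M - int i) \<and> ks = map b [0..<n]"
    using assms by (auto simp: b cat_vac_def intro!: nth_equalityI)
next
  assume h: "(\<forall>i\<ge>n. b i = M - int i) \<and> ks = map b [0..<n]"
  show "b = cat_vac ks (M - int n)"
  proof
    fix i show "b i = cat_vac ks (M - int n) i"
      using h assms by (cases "i < n") (auto simp: cat_vac_def)
  qed
qed

lemma fin_dec:
  assumes N: "N \<ge> 1" and L: "L \<ge> 1" and dv: "int N * int L dvd M - int n"
    and fb: "fin_basis N L M n d ks"
  shows "\<forall>i j. i < j \<longrightarrow> cat_vac ks (M - int n) j < cat_vac ks (M - int n) i"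
proof -
  have len: "length ks = n" and srt: "sorted_wrt (>) ks"
    and lst: "n > 0 \<longrightarrow> ul N L (ks ! (n - 1)) \<le> ul N L (M - int (n - 1))"
    using fb by (auto simp: fin_basis_def)
  have big: "ks ! i > M - int n" if "i < n" for i
  proof -
    have n0: "n > 0" using that by simp
    have last: "ks ! (n - 1) > M - int n"
    proof (rule ccontr)
      assume "\<not> ?thesis"
      hence "ul N L (M - int n) \<le> ul N L (ks ! (n - 1))" using ul_anti[OF N L] by simp
      moreover have "ul N L (M - int (n - 1)) < ul N L (M - int n)"
        using ul_strict[OF N L dv] n0 by (simp add: of_nat_diff)
      ultimately show False using lst n0 by simp
    qed
    show ?thesis
    proof (cases "i = n - 1")
      case True thus ?thesis using last by simp
    next
      case False
      hence "i < n - 1" using that by simp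
      hence "ks ! i > ks ! (n - 1)" using srt len n0 by (simp add: sorted_wrt_iff_nth_less)
      thus ?thesis using last by simp
    qed
  qed
  show ?thesis
  proof (intro allI impI)
    fix i j :: nat assume ij: "i < j"
    show "cat_vac ks (M - int n) j < cat_vac ks (M - int n) i"
    proof (cases "j < n")
      case True
      thus ?thesis using ij srt len by (simp add: cat_vac_def sorted_wrt_iff_nth_less)
    next
      case False
      show ?thesis
      proof (cases "i < n")
        case True thus ?thesis using False big[of i] len by (simp add: cat_vac_def)
      next
        case F2: False thus ?thesis using False ij len by (simp add: cat_vac_def)
      qed
    qed
  qed
qed

lemma rho_formula:
  assumes N: "N \<ge> 1" and L: "L \<ge> 1" and dv: "int N * int L dvd M - int n"
    and v: "v \<in> Vsp N L M n d"
  shows "rho M n v = (\<lambda>b. if (\<forall>i\<ge>n. b i = M - int i) then v (map b [0..<n]) else 0)"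
proof
  fix b
  define S where "S = {x. v x \<noteq> 0}"
  have finS: "finite S" and fbS: "\<And>ks. ks \<in> S \<Longrightarrow> fin_basis N L M n d ks"
    using v by (auto simp: Vsp_def S_def)
  have "rho M n v b = (\<Sum>ks\<in>S. v ks * swedge (cat_vac ks (M - int n)) b)"
    by (simp add: rho_def S_def)
  also have "\<dots> = (\<Sum>ks\<in>S. if (\<forall>i\<ge>n. b i = M - int i) \<and> ks = map b [0..<n] then v ks else 0)"
  proof (rule sum.cong[OF refl])
    fix ks assume ks: "ks \<in> S"
    have len: "length ks = n" using fbS[OF ks] by (simp add: fin_basis_def)
    show "v ks * swedge (cat_vac ks (M - int n)) b =
      (if (\<forall>i\<ge>n. b i = M - int i) \<and> ks = map b [0..<n] then v ks else 0)"
      using swedge_dec[OF fin_dec[OF N L dv fbS[OF ks]]] cat_vac_char[OF len, of b M]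
      by auto
  qed
  also have "\<dots> = (if (\<forall>i\<ge>n. b i = M - int i) then v (map b [0..<n]) else 0)"
  proof (cases "\<forall>i\<ge>n. b i = M - int i")
    case True
    have "(\<Sum>ks\<in>S. if (\<forall>i\<ge>n. b i = M - int i) \<and> ks = map b [0..<n] then v ks else 0)
        = (\<Sum>ks\<in>S. if map b [0..<n] = ks then v ks else 0)"
      using True by (intro sum.cong) auto
    also have "\<dots> = v (map b [0..<n])" using finS by (simp add: S_def)
    finally show ?thesis using True by simp
  next
    case False
    hence "(\<lambda>ks. if (\<forall>i\<ge>n. b i = M - int i) \<and> ks = map b [0..<n] then v ks else 0) = (\<lambda>_. 0)"
      by (intro ext) (simp only: if_False simp_thms)
    thus ?thesis by (subst if_not_P[OF False]) (simp only: sum.neutral_const)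
  qed
  finally show "rho M n v b = (if (\<forall>i\<ge>n. b i = M - int i) then v (map b [0..<n]) else 0)" .
qed

lemma sum_dev:
  assumes "\<forall>i\<ge>n. c i = M - int i"
  shows "(\<Sum>i\<in>{i. c i \<noteq> M - int i}. ul N L (M - int i) - ul N L (c i))
       = (\<Sum>i<n. ul N L (M - int i) - ul N L (c i))"
proof (rule sum.mono_neutral_left)
  show "{i. c i \<noteq> M - int i} \<subseteq> {..<n}" using assms by (auto simp: not_less[symmetric])
qed auto

lemma cat_vac_tail:
  assumes "length ks = n"
  shows "\<forall>i\<ge>n. cat_vac ks (M - int n) i = M - int i" "map (cat_vac ks (M - int n)) [0..<n] = ks"
  using cat_vac_char[OF assms, of "cat_vac ks (M - int n)" M] by auto

lemma cat_vac_lt: "i < length ks \<Longrightarrow> cat_vac ks K i = ks ! i"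
  by (simp add: cat_vac_def)

theorem proposition3p3:
  fixes N L s l d :: nat and M :: int
  assumes "N \<ge> 2" and "L \<ge> 2"
    and "s < N * L" and "[M = int s] (mod int (N * L))"
    and "d \<le> l"
  shows "(\<forall>v \<in> Vsp N L M (s + l * N * L) (int d).
            rho M (s + l * N * L) v \<in> Fsp N L M (int d))
       \<and> (\<forall>a v w. v \<in> Vsp N L M (s + l * N * L) (int d) \<longrightarrow> w \<in> Vsp N L M (s + l * N * L) (int d) \<longrightarrow>
            rho M (s + l * N * L) (\<lambda>x. a * v x + w x)
              = (\<lambda>b. a * rho M (s + l * N * L) v b + rho M (s + l * N * L) w b))
       \<and> bij_betw (rho M (s + l * N * L)) (Vsp N L M (s + l * N * L) (int d)) (Fsp N L M (int d))"
proof -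
  define n where "n = s + l * N * L"
  define K where "K = M - int n"
  have N: "N \<ge> 1" and L: "L \<ge> 1" using assms by auto
  have dvMs: "int N * int L dvd M - int s" using assms(4) by (simp add: cong_iff_dvd_diff)
  have dv: "int N * int L dvd M - int n"
  proof -
    have "M - int n = (M - int s) - (int N * int L) * int l" by (simp add: n_def algebra_simps)
    thus ?thesis using dvMs by (metis dvd_diff dvd_triv_left)
  qed
  let ?V = "Vsp N L M n (int d)" and ?F = "Fsp N L M (int d)"
  define R where "R = (\<lambda>v b. if (\<forall>i\<ge>n. b i = M - int i) then v (map b [0..<n]) else (0::complex))"
  have rhoR: "rho M n v = R v" if "v \<in> ?V" for v
    using rho_formula[OF N L dv that] by (simp add: R_def)
  have tailF: "\<forall>i\<ge>n. b i = M - int i" if "semi_basis N L M (int d) b" for b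
    using semi_tail[OF N L that _ assms(4), of l] assms(5) by (simp add: n_def)
  have inF: "R v \<in> ?F" if v: "v \<in> ?V" for v
  proof -
    have sub: "{b. R v b \<noteq> 0} \<subseteq> (\<lambda>ks. cat_vac ks K) ` {x. v x \<noteq> 0}"
    proof
      fix b assume "b \<in> {b. R v b \<noteq> 0}"
      hence t: "\<forall>i\<ge>n. b i = M - int i" and nz: "v (map b [0..<n]) \<noteq> 0"
        by (auto simp: R_def split: if_splits)
      have "b = cat_vac (map b [0..<n]) K"
        using cat_vac_char[of "map b [0..<n]" n b M] t by (simp add: K_def)
      thus "b \<in> (\<lambda>ks. cat_vac ks K) ` {x. v x \<noteq> 0}" using nz by blast
    qed
    have sb: "semi_basis N L M (int d) b" if nz: "R v b \<noteq> 0" for b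
    proof -
      have t: "\<forall>i\<ge>n. b i = M - int i" and nz: "v (map b [0..<n]) \<noteq> 0"
        using nz by (auto simp: R_def split: if_splits)
      define ks where "ks = map b [0..<n]"
      have fb: "fin_basis N L M n (int d) ks" using v nz by (auto simp: Vsp_def ks_def)
      have beq: "b = cat_vac ks K"
        using cat_vac_char[of ks n b M] t by (simp add: K_def ks_def)
      have dec: "\<forall>i j. i < j \<longrightarrow> b j < b i"
        using fin_dec[OF N L dv fb] beq by (simp add: K_def)
      have fin: "finite {i. b i \<noteq> M - int i}"
        by (rule finite_subset[of _ "{..<n}"]) (use t in \<open>auto simp: not_less[symmetric]\<close>)
      have "(\<Sum>i\<in>{i. b i \<noteq> M - int i}. ul N L (M - int i) - ul N L (b i))
          = (\<Sum>i<n. ul N L (M - int i) - ul N L (b i))" using sum_dev[OF t] .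
      also have "\<dots> = (\<Sum>i<n. ul N L (M - int i) - ul N L (ks ! i))"
        by (intro sum.cong) (auto simp: ks_def)
      also have "\<dots> = int d" using fb by (simp add: fin_basis_def)
      finally show ?thesis using dec fin by (simp add: semi_basis_def)
    qed
    show ?thesis unfolding Fsp_def
      using finite_subset[OF sub] v sb by (auto simp: Vsp_def)
  qed
  have lin: "(\<lambda>x. a * v x + w x) \<in> ?V" if "v \<in> ?V" "w \<in> ?V" for a v w
  proof -
    have "{x. a * v x + w x \<noteq> 0} \<subseteq> {x. v x \<noteq> 0} \<union> {x. w x \<noteq> 0}" by auto
    thus ?thesis using that unfolding Vsp_def
      by (auto intro: finite_subset)
  qed
  have P1: "\<forall>v \<in> ?V. rho M n v \<in> ?F" using inF rhoR by simp
  have P2: "\<forall>a v w. v \<in> ?V \<longrightarrow> w \<in> ?V \<longrightarrow>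
            rho M n (\<lambda>x. a * v x + w x) = (\<lambda>b. a * rho M n v b + rho M n w b)"
  proof (intro allI impI)
    fix a v w assume v: "v \<in> ?V" and w: "w \<in> ?V"
    show "rho M n (\<lambda>x. a * v x + w x) = (\<lambda>b. a * rho M n v b + rho M n w b)"
      unfolding rhoR[OF lin[OF v w]] rhoR[OF v] rhoR[OF w] R_def
    proof
      fix b
      show "(if \<forall>i\<ge>n. b i = M - int i then a * v (map b [0..<n]) + w (map b [0..<n]) else 0) =
         a * (if \<forall>i\<ge>n. b i = M - int i then v (map b [0..<n]) else 0) +
         (if \<forall>i\<ge>n. b i = M - int i then w (map b [0..<n]) else 0)"
      proof (cases "\<forall>i\<ge>n. b i = M - int i")
        case True show ?thesis by (simp only: if_P[OF True])
      next
        case False show ?thesis by (simp only: if_not_P[OF False] mult_zero_right add_0_right)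
      qed
    qed
  qed
  have inj: "inj_on (rho M n) ?V"
  proof (rule inj_onI)
    fix v w assume v: "v \<in> ?V" and w: "w \<in> ?V" and eq: "rho M n v = rho M n w"
    hence eqR: "R v = R w" using rhoR by simp
    show "v = w"
    proof
      fix ks
      show "v ks = w ks"
      proof (cases "fin_basis N L M n (int d) ks")
        case True
        hence len: "length ks = n" by (simp add: fin_basis_def)
        have "R v (cat_vac ks K) = v ks" "R w (cat_vac ks K) = w ks"
          using cat_vac_tail[OF len, of M] by (auto simp: R_def K_def)
        thus ?thesis using eqR by metis
      next
        case False
        thus ?thesis using v w unfolding Vsp_def by (metis (mono_tags, lifting) mem_Collect_eq)
      qed
    qed
  qed
  have surj: "?F \<subseteq> rho M n ` ?V"
  proof
    fix f assume f: "f \<in> ?F"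
    define v where "v = (\<lambda>ks. if length ks = n then f (cat_vac ks K) else 0)"
    have fbv: "fin_basis N L M n (int d) ks" if nz: "v ks \<noteq> 0" for ks
    proof -
      have len: "length ks = n" and fz: "f (cat_vac ks K) \<noteq> 0" using nz by (auto simp: v_def split: if_splits)
      define c where "c = cat_vac ks K"
      have sb: "semi_basis N L M (int d) c" using f fz by (auto simp: Fsp_def c_def)
      have dec: "\<forall>i j. i < j \<longrightarrow> c j < c i" and
        sm: "(\<Sum>i\<in>{i. c i \<noteq> M - int i}. ul N L (M - int i) - ul N L (c i)) = int d"
        using sb by (auto simp: semi_basis_def)
      have ct: "\<forall>i\<ge>n. c i = M - int i" using cat_vac_tail(1)[OF len, of M] by (simp add: c_def K_def)
      have cl: "c i = ks ! i" if "i < n" for i using that len by (simp add: c_def cat_vac_lt)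
      have "sorted_wrt (>) ks"
        unfolding sorted_wrt_iff_nth_less
      proof (intro allI impI)
        fix i j :: nat assume ij0: "i < j" "j < length ks"
        hence ij: "i < j \<and> j < length ks" by simp
        hence "c j < c i" using dec by blast
        moreover have "c i = ks ! i" "c j = ks ! j" using ij cl len by auto
        ultimately show "ks ! j < ks ! i" by simp
      qed
      moreover have "n > 0 \<longrightarrow> ul N L (ks ! (n - 1)) \<le> ul N L (M - int (n - 1))"
      proof
        assume n0: "n > 0"
        have "c (n - 1) > c n" using dec n0 by simp
        hence "ks ! (n - 1) \<ge> M - int (n - 1)" using cl[of "n - 1"] ct n0 by (simp add: of_nat_diff)
        thus "ul N L (ks ! (n - 1)) \<le> ul N L (M - int (n - 1))" by (rule ul_anti[OF N L])
      qed
      moreover have "(\<Sum>i<n. ul N L (M - int i) - ul N L (ks ! i)) = int d"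
      proof -
        have "(\<Sum>i<n. ul N L (M - int i) - ul N L (ks ! i)) = (\<Sum>i<n. ul N L (M - int i) - ul N L (c i))"
          using cl by (intro sum.cong) auto
        also have "\<dots> = int d" using sum_dev[OF ct] sm by simp
        finally show ?thesis .
      qed
      ultimately show ?thesis using len by (simp add: fin_basis_def)
    qed
    have finv: "finite {x. v x \<noteq> 0}"
    proof (rule finite_subset)
      show "{x. v x \<noteq> 0} \<subseteq> (\<lambda>b. map b [0..<n]) ` {b. f b \<noteq> 0}"
      proof
        fix ks assume "ks \<in> {x. v x \<noteq> 0}"
        hence len: "length ks = n" and fz: "f (cat_vac ks K) \<noteq> 0" by (auto simp: v_def split: if_splits)
        have "ks = map (cat_vac ks K) [0..<n]" using cat_vac_tail(2)[OF len, of M] by (simp add: K_def)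
        thus "ks \<in> (\<lambda>b. map b [0..<n]) ` {b. f b \<noteq> 0}" using fz by blast
      qed
      show "finite ((\<lambda>b. map b [0..<n]) ` {b. f b \<noteq> 0})" using f by (simp add: Fsp_def)
    qed
    have vV: "v \<in> ?V" using finv fbv by (simp add: Vsp_def)
    have "rho M n v = f"
    proof
      fix b
      show "rho M n v b = f b"
      proof (cases "\<forall>i\<ge>n. b i = M - int i")
        case True
        have "cat_vac (map b [0..<n]) K = b"
          using cat_vac_char[of "map b [0..<n]" n b M] True by (simp add: K_def)
        thus ?thesis using True rhoR[OF vV] by (simp add: R_def v_def)
      next
        case False
        have "f b = 0"
        proof (rule ccontr)
          assume "f b \<noteq> 0"
          hence "semi_basis N L M (int d) b" using f by (auto simp: Fsp_def)
          thus False using tailF False by blast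
        qed
        thus ?thesis unfolding rhoR[OF vV] R_def by (simp only: if_not_P[OF False])
      qed
    qed
    thus "f \<in> rho M n ` ?V" using vV by blast
  qed
  have "bij_betw (rho M n) ?V ?F"
    unfolding bij_betw_def using inj surj P1 by blast
  thus ?thesis using P1 P2 unfolding n_def by blast
qed

end
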